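(* Let $(X,d_X)$ and $(Y,d_Y)$ be separable metric spaces such that $d_X$ is an ultrametric. For every $f: X\to Y$ the following are equivalent: (i) $f$ is of Baire class $1$; (ii) $f$ is the pointwise limit of a sequence of $\omega$-full functions; (iii) $f$ is the pointwise limit of a sequence of Lipschitz functions; (iv) $f$ is the pointwise limit of a sequence of uniformly continuous functions.
   Context: Work in ZF plus countable choice over the reals. A function $f:X\to Y$ is of Baire class $1$ if $f^{-1}(U)\in\mathbf{\Sigma}^0_2(X)$ for every open $U\subseteq Y$. A set $A\subseteq X$ is full with constant $r>0$ if $B(x,r)=\{y\in X:d_X(x,y)<r\}\subseteq A$ for every $x\in A$. A function $f:X\to Y$ is $\omega$-full if it has at most countably many values and there is a fixed $r>0$ such that the preimage of each value is a full set with constant $r$. A function $g:X\to Y$ is Lipschitz if there is $L>0$ with $d_Y(g(x),g(x'))\le L\, d_X(x,x')$ for all $x,x'\in X$. *)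

theory Defs
  imports "HOL-Analysis.Analysis"
begin

definition ultrametric :: "'a metric \<Rightarrow> bool" where
  "ultrametric m \<longleftrightarrow>
     (\<forall>x\<in>mspace m. \<forall>y\<in>mspace m. \<forall>z\<in>mspace m.
        mdist m x z \<le> max (mdist m x y) (mdist m y z))"

definition baire_class_1 :: "'a metric \<Rightarrow> 'b metric \<Rightarrow> ('a \<Rightarrow> 'b) \<Rightarrow> bool" where
  "baire_class_1 mX mY f \<longleftrightarrow>
     f \<in> mspace mX \<rightarrow> mspace mY \<and>
     (\<forall>U. openin (mtopology_of mY) U \<longrightarrow>
        fsigma_in (mtopology_of mX) {x \<in> mspace mX. f x \<in> U})"

definition full_set :: "'a metric \<Rightarrow> 'a set \<Rightarrow> real \<Rightarrow> bool" where
  "full_set mX A r \<longleftrightarrow> A \<subseteq> mspace mX \<and> (\<forall>x\<in>A. mball_of mX x r \<subseteq> A)"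

definition omega_full :: "'a metric \<Rightarrow> 'b metric \<Rightarrow> ('a \<Rightarrow> 'b) \<Rightarrow> bool" where
  "omega_full mX mY f \<longleftrightarrow>
     f \<in> mspace mX \<rightarrow> mspace mY \<and>
     countable (f ` mspace mX) \<and>
     (\<exists>r>0. \<forall>y\<in>f ` mspace mX. full_set mX {x \<in> mspace mX. f x = y} r)"

definition pointwise_limit :: "'a metric \<Rightarrow> 'b metric \<Rightarrow> (nat \<Rightarrow> 'a \<Rightarrow> 'b) \<Rightarrow> ('a \<Rightarrow> 'b) \<Rightarrow> bool" where
  "pointwise_limit mX mY g f \<longleftrightarrow>
     (\<forall>x\<in>mspace mX. limitin (mtopology_of mY) (\<lambda>n. g n x) (f x) sequentially)"

end

theory Submission
  imports Defs
begin


lemma lim_iff: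
  "limitin (mtopology_of m) s l sequentially \<longleftrightarrow>
     l \<in> mspace m \<and> (\<forall>\<epsilon>>0. \<exists>N. \<forall>n\<ge>N. s n \<in> mspace m \<and> mdist m (s n) l < \<epsilon>)"
  by (simp add: mtopology_of_def Metric_space.limit_metric_sequentially[OF Metric_space_mspace_mdist])

lemma mdist_self [simp]: "x \<in> mspace m \<Longrightarrow> mdist m x x = 0"
  by simp

lemma open_iff:
  "openin (mtopology_of m) U \<longleftrightarrow> U \<subseteq> mspace m \<and> (\<forall>x\<in>U. \<exists>r>0. mball_of m x r \<subseteq> U)"
  by (auto simp: mtopology_of_def mball_of_def Metric_space.openin_mtopology[OF Metric_space_mspace_mdist])

lemma closed_iff:
  "closedin (mtopology_of m) C \<longleftrightarrow> C \<subseteq> mspace m \<and> (\<forall>x\<in>mspace m - C. \<exists>r>0. disjnt C (mball_of m x r))"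
  by (auto simp: mtopology_of_def mball_of_def Metric_space.closedin_metric[OF Metric_space_mspace_mdist])

lemma open_mball_of: "openin (mtopology_of m) (mball_of m x r)"
  by (simp add: mtopology_of_def mball_of_def Metric_space.openin_mball[OF Metric_space_mspace_mdist])

lemma partA:
  assumes cont: "\<And>n. continuous_map (mtopology_of mX) (mtopology_of mY) (g n)"
    and lim: "pointwise_limit mX mY g f"
    and fX: "f \<in> mspace mX \<rightarrow> mspace mY"
  shows "baire_class_1 mX mY f"
  unfolding baire_class_1_def
proof (intro conjI allI impI)
  show "f \<in> mspace mX \<rightarrow> mspace mY" by fact
  fix U assume U: "openin (mtopology_of mY) U"
  define F where "F m = {y \<in> mspace mY. \<forall>z\<in>mspace mY - U. 1/Suc m \<le> mdist mY y z}" for m :: nat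
  have clF: "closedin (mtopology_of mY) (F m)" for m
    unfolding closed_iff
  proof (intro conjI ballI)
    show "F m \<subseteq> mspace mY" by (auto simp: F_def)
    fix y assume y: "y \<in> mspace mY - F m"
    then obtain z where z: "z \<in> mspace mY - U" "mdist mY y z < 1/Suc m"
      by (auto simp: F_def not_le)
    show "\<exists>r>0. disjnt (F m) (mball_of mY y r)"
    proof (intro exI conjI)
      show "0 < 1/Suc m - mdist mY y z" using z by simp
      show "disjnt (F m) (mball_of mY y (1/Suc m - mdist mY y z))"
      unfolding disjnt_def
      proof (rule equals0I)
        fix w assume "w \<in> F m \<inter> mball_of mY y (1 / real (Suc m) - mdist mY y z)"
        then have w: "w \<in> F m" "w \<in> mball_of mY y (1 / real (Suc m) - mdist mY y z)" by auto
        then have "1/Suc m \<le> mdist mY w z" using z by (auto simp: F_def)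
        moreover have "mdist mY w z \<le> mdist mY w y + mdist mY y z"
          using w z y by (intro mdist_triangle) auto
        ultimately show False using w by (auto simp: mdist_commute)
      qed
    qed
  qed
  define S where "S = (\<lambda>(m,k). \<Inter>n\<in>{k..}. {x \<in> topspace (mtopology_of mX). g n x \<in> F m})"
  have clS: "closedin (mtopology_of mX) (S p)" for p
  proof -
    obtain m k where p: "p = (m,k)" by fastforce
    show ?thesis unfolding p S_def
      using closedin_continuous_map_preimage[OF cont clF]
      by (auto intro!: closedin_Inter)
  qed
  have eq: "{x \<in> mspace mX. f x \<in> U} = \<Union> (range S)"
  proof safe
    fix x assume x: "x \<in> mspace mX" "f x \<in> U"
    obtain e where e: "e > 0" "mball_of mY (f x) e \<subseteq> U" using U x unfolding open_iff by blast
    obtain m :: nat where m: "2 / e < m" using reals_Archimedean2 by blast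
    have m2: "2 / Suc m < e" using m e by (simp add: field_simps)
    obtain k where k: "\<forall>n\<ge>k. g n x \<in> mspace mY \<and> mdist mY (g n x) (f x) < 1/Suc m"
      using lim x unfolding pointwise_limit_def lim_iff by (meson of_nat_0_less_iff zero_less_Suc divide_pos_pos zero_less_one)
    have "x \<in> S (m,k)"
      unfolding S_def
    proof (clarsimp simp: x)
      fix n assume n: "k \<le> n"
      show "g n x \<in> F m" unfolding F_def
      proof (clarsimp simp: k[rule_format, OF n])
        fix z assume z: "z \<in> mspace mY" "z \<notin> U"
        have fx: "f x \<in> mspace mY" using fX x by auto
        have "e \<le> mdist mY (f x) z" using z e fx by (force simp: not_less)
        moreover have "mdist mY (f x) z \<le> mdist mY (f x) (g n x) + mdist mY (g n x) z"
          using fx z k n by (intro mdist_triangle) auto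
        ultimately show "1 / (1 + real m) \<le> mdist mY (g n x) z"
          using k n m2 by (auto simp: mdist_commute)
      qed
    qed
    then show "x \<in> \<Union> (range S)" by blast
  next
    fix x p assume "x \<in> S p"
    then show "x \<in> mspace mX" by (auto simp: S_def split: prod.splits)
  next
    fix x p assume xS: "x \<in> S p"
    obtain m k where p: "p = (m,k)" by fastforce
    have x: "x \<in> mspace mX" and gF: "\<And>n. n \<ge> k \<Longrightarrow> g n x \<in> F m" using xS by (auto simp: S_def p)
    show "f x \<in> U"
    proof (rule ccontr)
      assume nU: "f x \<notin> U"
      have fx: "f x \<in> mspace mY" using fX x by auto
      obtain N where N: "\<forall>n\<ge>N. g n x \<in> mspace mY \<and> mdist mY (g n x) (f x) < 1/Suc m"
        using lim x unfolding pointwise_limit_def lim_iff by (meson of_nat_0_less_iff zero_less_Suc divide_pos_pos zero_less_one)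
      have "g (max N k) x \<in> F m" using gF by simp
      then have "1/Suc m \<le> mdist mY (g (max N k) x) (f x)" using nU fx by (auto simp: F_def)
      then show False using N by (meson max.cobounded1 not_le)
    qed
  qed
  show "fsigma_in (mtopology_of mX) {x \<in> mspace mX. f x \<in> U}"
    unfolding eq by (rule fsigma_in_Union) (auto intro: closed_imp_fsigma_in clS)
qed



lemma ultra_ball_eq:
  assumes um: "ultrametric mX" and x: "x \<in> mspace mX" and z: "z \<in> mspace mX"
    and d: "mdist mX x z < r"
  shows "mball_of mX z r = mball_of mX x r"
proof -
  have *: "mball_of mX a r \<subseteq> mball_of mX b r"
    if a: "a \<in> mspace mX" and b: "b \<in> mspace mX" and ab: "mdist mX a b < r" for a b
  proof
    fix v assume v: "v \<in> mball_of mX a r"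
    then have "mdist mX b v \<le> max (mdist mX b a) (mdist mX a v)"
      using um a b unfolding ultrametric_def by auto
    then show "v \<in> mball_of mX b r" using v ab b by (auto simp: mdist_commute)
  qed
  show ?thesis using *[OF x z d] *[OF z x] d by (auto simp: mdist_commute)
qed

lemma t_small: "(\<delta>::real) > 0 \<Longrightarrow> eventually (\<lambda>N. 1 / real (Suc N) < \<delta>) sequentially"
proof -
  assume d: "\<delta> > 0"
  obtain K :: nat where K: "1 / \<delta> < K" using reals_Archimedean2 by blast
  show ?thesis unfolding eventually_sequentially
  proof (intro exI allI impI)
    fix N assume "K \<le> N"
    then have "1/\<delta> < real (Suc N)" using K by linarith
    then show "1 / real (Suc N) < \<delta>" using d by (simp add: field_simps)
  qed
qed

lemma partB_core:
  fixes C :: "nat \<Rightarrow> nat \<Rightarrow> 'a set" and w :: "nat \<Rightarrow> nat \<Rightarrow> 'b"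
  assumes um: "ultrametric mX"
    and clC: "\<And>n j. closedin (mtopology_of mX) (C n j)"
    and Cf: "\<And>n j x. x \<in> C n j \<Longrightarrow> mdist mY (f x) (w n j) < 1 / real (Suc n)"
    and cover: "\<And>n x. x \<in> mspace mX \<Longrightarrow> \<exists>j. x \<in> C n j"
    and wW: "\<And>n j. w n j \<in> W" and W: "countable W" "W \<subseteq> mspace mY" and yd: "yd \<in> mspace mY"
    and fX: "f \<in> mspace mX \<rightarrow> mspace mY"
  shows "\<exists>g. (\<forall>n. omega_full mX mY (g n)) \<and> pointwise_limit mX mY g f"
proof -
  define t where "t n = 1 / real (Suc n)" for n
  define hit where "hit B n j = (B \<inter> C n j \<noteq> {})" for B n j
  define dfd where "dfd N B n = (\<exists>j\<le>N. hit B n j)" for N B n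
  define c where "c B n = w n (LEAST j. hit B n j)" for B n
  define good where "good N B m = (m \<le> N \<and> (\<forall>j\<le>m. dfd N B j \<and> mdist mY (c B j) (c B m) < t j + t m))" for N B m
  define G where "G N B = (if \<exists>m. good N B m then c B (GREATEST m. good N B m) else yd)" for N B
  define g where "g N x = G N (mball_of mX x (t N))" for N x
  have tpos: "t n > 0" for n by (simp add: t_def)
  have cW: "c B n \<in> mspace mY" for B n using wW W by (auto simp: c_def)
  have GW: "G N B \<in> insert yd W" for N B using wW by (auto simp: G_def c_def)
  have gX: "g N x \<in> mspace mY" for N x using GW[of N "mball_of mX x (t N)"] W yd by (auto simp: g_def)
  have "omega_full mX mY (g N)" for N
    unfolding omega_full_def
  proof (intro conjI)
    show "g N \<in> mspace mX \<rightarrow> mspace mY" using gX by auto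
    show "countable (g N ` mspace mX)"
      by (rule countable_subset[of _ "insert yd W"]) (use GW W in \<open>auto simp: g_def\<close>)
    show "\<exists>r>0. \<forall>y\<in>g N ` mspace mX. full_set mX {x \<in> mspace mX. g N x = y} r"
    proof (intro exI conjI ballI)
      show "t N > 0" by (rule tpos)
      fix y assume "y \<in> g N ` mspace mX"
      show "full_set mX {x \<in> mspace mX. g N x = y} (t N)"
        unfolding full_set_def
      proof (intro conjI ballI subsetI)
        fix x z assume x: "x \<in> {x \<in> mspace mX. g N x = y}" and z: "z \<in> mball_of mX x (t N)"
        then have "mball_of mX z (t N) = mball_of mX x (t N)"
          using ultra_ball_eq[OF um, of x z] by auto
        then show "z \<in> {x \<in> mspace mX. g N x = y}" using x z by (auto simp: g_def)
      qed auto
    qed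
  qed
  moreover have "pointwise_limit mX mY g f"
    unfolding pointwise_limit_def lim_iff
  proof (intro ballI conjI allI impI)
    fix x assume x: "x \<in> mspace mX"
    then show fx: "f x \<in> mspace mY" using fX by auto
    define B where "B N = mball_of mX x (t N)" for N
    have xB: "x \<in> B N" for N using x tpos by (simp add: B_def)
    have evn: "eventually (\<lambda>N. N \<ge> n \<and> dfd N (B N) n \<and> mdist mY (c (B N) n) (f x) < t n) sequentially" for n
    proof -
      define j0 where "j0 = (LEAST j. x \<in> C n j)"
      have xj0: "x \<in> C n j0" unfolding j0_def using cover[OF x, of n] by (rule LeastI_ex)
      have nj: "x \<notin> C n j" if "j < j0" for j using that not_less_Least unfolding j0_def by blast
      have "\<forall>j\<in>{..<j0}. eventually (\<lambda>N. \<not> hit (B N) n j) sequentially"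
      proof
        fix j assume "j \<in> {..<j0}"
        then have "x \<in> mspace mX - C n j" using nj x by auto
        then obtain \<delta> where d: "\<delta> > 0" "disjnt (C n j) (mball_of mX x \<delta>)"
          using clC[of n j] unfolding closed_iff by blast
        show "eventually (\<lambda>N. \<not> hit (B N) n j) sequentially"
          using t_small[OF d(1)]
        proof (rule eventually_mono)
          fix N assume "1 / real (Suc N) < \<delta>"
          then have "B N \<subseteq> mball_of mX x \<delta>" by (auto simp: B_def t_def)
          then show "\<not> hit (B N) n j" using d(2) by (auto simp: hit_def disjnt_def)
        qed
      qed
      then have ev1: "eventually (\<lambda>N. \<forall>j\<in>{..<j0}. \<not> hit (B N) n j) sequentially"
        by (rule eventually_ball_finite[rotated]) simp
      have ev2: "eventually (\<lambda>N. N \<ge> max n j0) sequentially" by (rule eventually_ge_at_top)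
      show ?thesis using ev1 ev2
      proof (rule eventually_elim2)
        fix N assume H: "\<forall>j\<in>{..<j0}. \<not> hit (B N) n j" and N: "max n j0 \<le> N"
        have h0: "hit (B N) n j0" using xB xj0 by (auto simp: hit_def)
        have L: "(LEAST j. hit (B N) n j) = j0"
          by (rule Least_equality) (use h0 H in \<open>auto simp: not_less[symmetric]\<close>)
        show "N \<ge> n \<and> dfd N (B N) n \<and> mdist mY (c (B N) n) (f x) < t n"
          using N h0 Cf[OF xj0] by (auto simp: dfd_def c_def L t_def mdist_commute intro!: exI[of _ j0])
      qed
    qed
    fix \<epsilon> :: real assume e: "\<epsilon> > 0"
    obtain n0 :: nat where n0: "3 / \<epsilon> < n0" using reals_Archimedean2 by blast
    have n0e: "3 * t n0 < \<epsilon>" using n0 e by (simp add: t_def field_simps)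
    have "eventually (\<lambda>N. \<forall>n\<in>{..n0}. N \<ge> n \<and> dfd N (B N) n \<and> mdist mY (c (B N) n) (f x) < t n) sequentially"
      by (rule eventually_ball_finite) (use evn in auto)
    then obtain N0 where N0: "\<And>N n. N \<ge> N0 \<Longrightarrow> n \<le> n0 \<Longrightarrow> N \<ge> n \<and> dfd N (B N) n \<and> mdist mY (c (B N) n) (f x) < t n"
      unfolding eventually_sequentially by auto
    show "\<exists>N. \<forall>n\<ge>N. g n x \<in> mspace mY \<and> mdist mY (g n x) (f x) < \<epsilon>"
    proof (intro exI allI impI conjI)
      fix N assume N: "N \<ge> N0"
      show "g N x \<in> mspace mY" by (rule gX)
      have gn0: "good N (B N) n0"
        unfolding good_def
      proof (intro conjI allI impI)
        show "n0 \<le> N" using N0[OF N, of n0] by simp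
        fix j assume j: "j \<le> n0"
        show "dfd N (B N) j" using N0[OF N j] by simp
        have "mdist mY (c (B N) j) (c (B N) n0) \<le> mdist mY (c (B N) j) (f x) + mdist mY (f x) (c (B N) n0)"
          using cW fx by (intro mdist_triangle) auto
        then show "mdist mY (c (B N) j) (c (B N) n0) < t j + t n0"
          using N0[OF N j] N0[OF N order_refl] by (simp add: mdist_commute)
      qed
      have bnd: "\<And>m. good N (B N) m \<Longrightarrow> m \<le> N" by (simp add: good_def)
      define m where "m = (GREATEST m. good N (B N) m)"
      have gm: "good N (B N) m" unfolding m_def by (rule GreatestI_nat[where P="good N (B N)", OF gn0 bnd])
      have nm: "n0 \<le> m" unfolding m_def by (rule Greatest_le_nat[where P="good N (B N)", OF gn0 bnd])
      have gx: "g N x = c (B N) m" using gn0 by (auto simp: g_def G_def B_def m_def)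
      have "mdist mY (c (B N) n0) (c (B N) m) < t n0 + t m" using gm nm by (auto simp: good_def)
      moreover have "t m \<le> t n0" using nm by (simp add: t_def frac_le)
      moreover have "mdist mY (c (B N) m) (f x) \<le> mdist mY (c (B N) m) (c (B N) n0) + mdist mY (c (B N) n0) (f x)"
        using cW fx by (intro mdist_triangle) auto
      moreover have "mdist mY (c (B N) n0) (f x) < t n0" using N0[OF N order_refl] by simp
      ultimately show "mdist mY (g N x) (f x) < \<epsilon>" using n0e gx by (simp add: mdist_commute)
    qed
  qed
  ultimately show ?thesis by blast
qed



lemma omega_full_local:
  assumes "omega_full mX mY g"
  obtains r where "r > 0" "\<And>x z. x \<in> mspace mX \<Longrightarrow> z \<in> mspace mX \<Longrightarrow> mdist mX x z < r \<Longrightarrow> g z = g x"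
proof -
  obtain r where r: "r > 0" "\<forall>y\<in>g ` mspace mX. full_set mX {x \<in> mspace mX. g x = y} r"
    using assms unfolding omega_full_def by blast
  have "g z = g x" if "x \<in> mspace mX" "z \<in> mspace mX" "mdist mX x z < r" for x z
  proof -
    have "full_set mX {w \<in> mspace mX. g w = g x} r" using r that by blast
    then have "mball_of mX x r \<subseteq> {w \<in> mspace mX. g w = g x}" using that unfolding full_set_def by blast
    then show ?thesis using that by auto
  qed
  then show ?thesis using r that by blast
qed

lemma partC:
  assumes om: "\<And>n. omega_full mX mY (g n)"
    and lim: "pointwise_limit mX mY g f"
    and p: "p \<in> mspace mY"
  shows "\<exists>h. (\<forall>n. Lipschitz_continuous_map mX mY (h n)) \<and> pointwise_limit mX mY h f"
proof -
  define h where "h n x = (if mdist mY (g n x) p \<le> real n then g n x else p)" for n x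
  have gX: "g n x \<in> mspace mY" if "x \<in> mspace mX" for n x
    using om[of n] that unfolding omega_full_def by auto
  have hX: "h n x \<in> mspace mY" if "x \<in> mspace mX" for n x
    using gX[OF that] p by (simp add: h_def)
  have hp: "mdist mY (h n x) p \<le> real n" for n x
    using p by (simp add: h_def)
  have "Lipschitz_continuous_map mX mY (h n)" for n
  proof -
    obtain r where r: "r > 0" "\<And>x z. x \<in> mspace mX \<Longrightarrow> z \<in> mspace mX \<Longrightarrow> mdist mX x z < r \<Longrightarrow> g n z = g n x"
      using omega_full_local[OF om[of n]] by blast
    have "mdist mY (h n x) (h n z) \<le> (2 * real n / r) * mdist mX x z"
      if x: "x \<in> mspace mX" and z: "z \<in> mspace mX" for x z
    proof (cases "mdist mX x z < r")
      case True
      then have "h n x = h n z" using r(2)[OF x z] by (simp add: h_def)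
      moreover have "0 \<le> (2 * real n / r) * mdist mX x z" using r by simp
      ultimately show ?thesis using hX[OF z] by simp
    next
      case False
      have "mdist mY (h n x) (h n z) \<le> mdist mY (h n x) p + mdist mY p (h n z)"
        using hX x z p by (intro mdist_triangle) auto
      also have "\<dots> \<le> 2 * real n" using hp[of n x] hp[of n z] by (simp add: mdist_commute)
      also have "\<dots> = (2 * real n / r) * r" using r by simp
      also have "\<dots> \<le> (2 * real n / r) * mdist mX x z"
        using False r by (intro mult_left_mono) auto
      finally show ?thesis .
    qed
    then show ?thesis unfolding Lipschitz_continuous_map_def using hX by blast
  qed
  moreover have "pointwise_limit mX mY h f"
    unfolding pointwise_limit_def
  proof
    fix x assume x: "x \<in> mspace mX"
    have L: "limitin (mtopology_of mY) (\<lambda>n. g n x) (f x) sequentially"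
      using lim x unfolding pointwise_limit_def by blast
    then have fx: "f x \<in> mspace mY" and "\<exists>N. \<forall>n\<ge>N. g n x \<in> mspace mY \<and> mdist mY (g n x) (f x) < 1"
      unfolding lim_iff by auto
    then obtain N where N: "\<forall>n\<ge>N. g n x \<in> mspace mY \<and> mdist mY (g n x) (f x) < 1" by blast
    obtain K :: nat where K: "mdist mY (f x) p + 1 \<le> K" using real_arch_simple by blast
    have "eventually (\<lambda>n. g n x = h n x) sequentially"
      unfolding eventually_sequentially
    proof (intro exI allI impI)
      fix n assume n: "max N K \<le> n"
      have "mdist mY (g n x) p \<le> mdist mY (g n x) (f x) + mdist mY (f x) p"
        using N n fx p by (intro mdist_triangle) auto
      also have "\<dots> \<le> real n" using N n K by fastforce
      finally show "g n x = h n x" by (simp add: h_def)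
    qed
    then show "limitin (mtopology_of mY) (\<lambda>n. h n x) (f x) sequentially"
      using limitin_transform_eventually L by fastforce
  qed
  ultimately show ?thesis by blast
qed



lemma partB:
  fixes mX :: "'a metric" and f :: "'a \<Rightarrow> 'b"
  assumes um: "ultrametric mX" and sepY: "separable_space (mtopology_of mY)"
    and bf: "baire_class_1 mX mY f"
  shows "\<exists>g. (\<forall>n. omega_full mX mY (g n)) \<and> pointwise_limit mX mY g f"
proof (cases "mspace mX = {}")
  case True
  have "omega_full mX mY f" using True unfolding omega_full_def by (auto intro: exI[of _ 1])
  moreover have "pointwise_limit mX mY (\<lambda>n. f) f" using True by (simp add: pointwise_limit_def)
  ultimately show ?thesis by (intro exI[of _ "\<lambda>n. f"]) simp
next
  case False
  have fX: "f \<in> mspace mX \<rightarrow> mspace mY" using bf by (simp add: baire_class_1_def)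
  obtain x0 where x0: "x0 \<in> mspace mX" using False by blast
  define y0 where "y0 = f x0"
  have y0: "y0 \<in> mspace mY" using fX x0 by (auto simp: y0_def)
  obtain D where D: "countable D" "D \<subseteq> mspace mY" "mtopology_of mY closure_of D = mspace mY"
    using sepY unfolding separable_space_def by auto
  define W where "W = insert y0 D"
  define e where "e = from_nat_into W"
  have W: "countable W" "W \<subseteq> mspace mY" "W \<noteq> {}" using D y0 by (auto simp: W_def)
  have rangee: "range e = W" unfolding e_def using W by (simp add: range_from_nat_into)
  have dense: "\<exists>i. mdist mY (e i) y < \<epsilon>" if y: "y \<in> mspace mY" and eps: "\<epsilon> > 0" for y \<epsilon>
  proof -
    have "y \<in> Metric_space.mtopology (mspace mY) (mdist mY) closure_of D"
      using D y by (simp add: mtopology_of_def)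
    then obtain d where "d \<in> D" "d \<in> mball_of mY y \<epsilon>"
      using eps by (auto simp: Metric_space.metric_closure_of[OF Metric_space_mspace_mdist] mball_of_def)
    then have "d \<in> range e" "mdist mY d y < \<epsilon>" using rangee by (auto simp: W_def mdist_commute)
    then show ?thesis by auto
  qed
  define P where "P n i = {x \<in> mspace mX. f x \<in> mball_of mY (e i) (1 / real (Suc n))}" for n i
  have "\<forall>ni. \<exists>Cs::nat\<Rightarrow>'a set. (\<forall>k. closedin (mtopology_of mX) (Cs k)) \<and> \<Union> (range Cs) = P (fst ni) (snd ni)"
  proof
    fix ni :: "nat \<times> nat"
    have H: "\<forall>U. openin (mtopology_of mY) U \<longrightarrow> fsigma_in (mtopology_of mX) {x \<in> mspace mX. f x \<in> U}"
      using bf unfolding baire_class_1_def by (rule conjunct2)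
    have "fsigma_in (mtopology_of mX) (P (fst ni) (snd ni))"
      unfolding P_def by (rule H[rule_format, OF open_mball_of])
    then obtain Cs :: "nat \<Rightarrow> 'a set" where "\<forall>k. closedin (mtopology_of mX) (Cs k)" "\<Union> (range Cs) = P (fst ni) (snd ni)"
      unfolding fsigma_in_ascending by metis
    then show "\<exists>Cs::nat\<Rightarrow>'a set. (\<forall>k. closedin (mtopology_of mX) (Cs k)) \<and> \<Union> (range Cs) = P (fst ni) (snd ni)"
      by blast
  qed
  from choice[OF this] obtain Cl :: "nat \<times> nat \<Rightarrow> nat \<Rightarrow> 'a set" where Cl0: "\<forall>ni. (\<forall>k. closedin (mtopology_of mX) (Cl ni k)) \<and> \<Union> (range (Cl ni)) = P (fst ni) (snd ni)"
    by blast
  have Cl1: "\<And>ni k. closedin (mtopology_of mX) (Cl ni k)" using Cl0 by blast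
  have Cl2: "\<And>ni. \<Union> (range (Cl ni)) = P (fst ni) (snd ni)" using Cl0 by blast
  note Cl = Cl1 Cl2
  define C where "C n j = Cl (n, fst (prod_decode j)) (snd (prod_decode j))" for n j
  define w where "w n j = e (fst (prod_decode j))" for n j :: nat
  show ?thesis
  proof (rule partB_core[OF um, where C=C and f=f and w=w and W=W and mY=mY and yd=y0])
    show "closedin (mtopology_of mX) (C n j)" for n j by (simp add: C_def Cl)
    show "mdist mY (f x) (w n j) < 1 / real (Suc n)" if "x \<in> C n j" for n j x
    proof -
      have "x \<in> P n (fst (prod_decode j))" using that Cl(2)[of "(n, fst (prod_decode j))"]
        by (auto simp: C_def)
      then show ?thesis by (auto simp: P_def w_def mdist_commute)
    qed
    show "\<exists>j. x \<in> C n j" if x: "x \<in> mspace mX" for n x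
    proof -
      obtain i where i: "mdist mY (e i) (f x) < 1 / real (Suc n)"
        using dense[of "f x" "1 / real (Suc n)"] fX x by auto
      have "e i \<in> mspace mY" using rangee W by auto
      then have "x \<in> P n i" using i x fX by (auto simp: P_def)
      then obtain k where "x \<in> Cl (n, i) k" using Cl(2)[of "(n,i)"] by auto
      then have "x \<in> C n (prod_encode (i,k))" by (simp add: C_def)
      then show ?thesis by blast
    qed
    show "w n j \<in> W" for n j using rangee by (auto simp: w_def)
  qed (use W y0 fX in auto)
qed

theorem mainTheorem2:
  fixes mX :: "'a metric" and mY :: "'b metric" and f :: "'a \<Rightarrow> 'b"
  assumes "separable_space (mtopology_of mX)"
    and "separable_space (mtopology_of mY)"
    and "ultrametric mX"
    and "f \<in> mspace mX \<rightarrow> mspace mY"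
  shows "(baire_class_1 mX mY f
            \<longleftrightarrow> (\<exists>g. (\<forall>n. omega_full mX mY (g n)) \<and> pointwise_limit mX mY g f))
       \<and> (baire_class_1 mX mY f
            \<longleftrightarrow> (\<exists>g. (\<forall>n. Lipschitz_continuous_map mX mY (g n)) \<and> pointwise_limit mX mY g f))
       \<and> (baire_class_1 mX mY f
            \<longleftrightarrow> (\<exists>g. (\<forall>n. uniformly_continuous_map mX mY (g n)) \<and> pointwise_limit mX mY g f))"
proof -
  have i_ii: "baire_class_1 mX mY f \<Longrightarrow> (\<exists>g. (\<forall>n. omega_full mX mY (g n)) \<and> pointwise_limit mX mY g f)"
    by (rule partB[OF assms(3) assms(2)])
  have ii_iii: "(\<exists>g. (\<forall>n. omega_full mX mY (g n)) \<and> pointwise_limit mX mY g f) \<Longrightarrow>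
      (\<exists>g. (\<forall>n. Lipschitz_continuous_map mX mY (g n)) \<and> pointwise_limit mX mY g f)"
  proof -
    assume H: "\<exists>g. (\<forall>n. omega_full mX mY (g n)) \<and> pointwise_limit mX mY g f"
    show ?thesis
    proof (cases "mspace mX = {}")
      case True
      then have "Lipschitz_continuous_map mX mY f" by (simp add: Lipschitz_continuous_map_def)
      moreover have "pointwise_limit mX mY (\<lambda>n. f) f" using True by (simp add: pointwise_limit_def)
      ultimately show ?thesis by (intro exI[of _ "\<lambda>n. f"]) simp
    next
      case False
      then obtain x0 where "x0 \<in> mspace mX" by blast
      then have p: "f x0 \<in> mspace mY" using assms(4) by auto
      obtain g where g: "\<And>n. omega_full mX mY (g n)" "pointwise_limit mX mY g f" using H by blast
      show ?thesis by (rule partC[OF g p])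
    qed
  qed
  have iii_iv: "(\<exists>g. (\<forall>n. Lipschitz_continuous_map mX mY (g n)) \<and> pointwise_limit mX mY g f) \<Longrightarrow>
      (\<exists>g. (\<forall>n. uniformly_continuous_map mX mY (g n)) \<and> pointwise_limit mX mY g f)"
  proof -
    assume "\<exists>g. (\<forall>n. Lipschitz_continuous_map mX mY (g n)) \<and> pointwise_limit mX mY g f"
    then obtain g where g: "\<And>n. Lipschitz_continuous_map mX mY (g n)" "pointwise_limit mX mY g f" by blast
    show ?thesis using Lipschitz_imp_uniformly_continuous_map[OF g(1)] g(2) by blast
  qed
  have iv_i: "(\<exists>g. (\<forall>n. uniformly_continuous_map mX mY (g n)) \<and> pointwise_limit mX mY g f) \<Longrightarrow>
      baire_class_1 mX mY f"
  proof -
    assume "\<exists>g. (\<forall>n. uniformly_continuous_map mX mY (g n)) \<and> pointwise_limit mX mY g f"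
    then obtain g where g: "\<And>n. uniformly_continuous_map mX mY (g n)" "pointwise_limit mX mY g f" by blast
    show ?thesis by (rule partA[OF uniformly_continuous_imp_continuous_map[OF g(1)] g(2) assms(4)])
  qed
  show ?thesis using i_ii ii_iii iii_iv iv_i by blast
qed


end
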